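(* Consider an operational theory with six preparation procedures $P_{t,b}$ ($t\in\{1,2,3\}$, $b\in\{0,1\}$) and three binary-outcome measurement procedures $M_y$ ($y\in\{1,2,3\}$). Let $P_t$ denote the preparation obtained by implementing $P_{t,0}$ or $P_{t,1}$ with probability $\tfrac12$ each, and assume trit-obliviousness: $p(X|M;P_1)=p(X|M;P_2)=p(X|M;P_3)$ for every measurement procedure $M$ of the theory. Define $c_y(t,b)=b$ if $t=y$ and $c_y(t,b)=b\oplus1$ if $t\neq y$, and $R_3=\frac1{18}\sum_{t,b,y}p(X=c_y(t,b)|M_y;P_{t,b})$. Then in any preparation-noncontextual ontological model reproducing these statistics, $R_3\leq\frac79$. Moreover, quantum theory violates this bound: for a qubit, with $\hat A_t=\cos\frac{2\pi(t-1)}{3}\sigma_z+\sin\frac{2\pi(t-1)}{3}\sigma_x$, taking $P_{t,b}$ to be the eigenstate of $\hat A_t$ with eigenvalue $(-1)^b$ and $M_y$ the measurement of $\hat A_y$ with outcome $X=0$ for eigenvalue $+1$ and $X=1$ for $-1$, the mixtures $P_t$ all equal the maximally mixed state $\mathbf{1}/2$ (so trit-obliviousness holds) and $R_3=\frac56$.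
   Context: An ontological model of an operational theory specifies ontic states $\lambda$, a distribution $p(\lambda|P)$ for each preparation procedure and a response function $p(X|M;\lambda)$ for each measurement procedure, with $p(X|M;P)=\sum_\lambda p(X|M;\lambda)p(\lambda|P)$; a probabilistic mixture of preparation procedures is represented by the corresponding mixture of their distributions. The model is preparation-noncontextual if any two preparation procedures that give the same outcome statistics for all measurements are represented by the same distribution $p(\lambda|P)$. *)

theory Defs
  imports "HOL-Probability.Probability"
begin

definition cfun :: "nat \<Rightarrow> nat \<Rightarrow> nat \<Rightarrow> nat" where
  "cfun y t b = (if t = y then b else 1 - b)"

definition model_prob :: "('p \<Rightarrow> 'l pmf) \<Rightarrow> ('m \<Rightarrow> 'l \<Rightarrow> nat pmf) \<Rightarrow> 'p \<Rightarrow> 'm \<Rightarrow> nat \<Rightarrow> real" where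
  "model_prob mu xi P M x = measure_pmf.expectation (mu P) (\<lambda>l. pmf (xi M l) x)"

definition prep_noncontextual ::
  "('p \<Rightarrow> 'm \<Rightarrow> nat \<Rightarrow> real) \<Rightarrow> ('p \<Rightarrow> 'l pmf) \<Rightarrow> bool" where
  "prep_noncontextual stat mu \<longleftrightarrow>
     (\<forall>P P'. (\<forall>M x. stat P M x = stat P' M x) \<longrightarrow> mu P = mu P')"

definition msc :: "complex \<Rightarrow> complex^2^2 \<Rightarrow> complex^2^2" where
  "msc c A = (\<chi> i j. c * A $ i $ j)"

definition sigma_z :: "complex^2^2" where
  "sigma_z = (\<chi> i j. if i = j then (if i = 1 then 1 else -1) else 0)"

definition sigma_x :: "complex^2^2" where
  "sigma_x = (\<chi> i j. if i = j then 0 else 1)"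

definition Aobs :: "nat \<Rightarrow> complex^2^2" where
  "Aobs t = msc (complex_of_real (cos (2 * pi * (real t - 1) / 3))) sigma_z
          + msc (complex_of_real (sin (2 * pi * (real t - 1) / 3))) sigma_x"

text \<open>Spectral projector of the +-1-valued observable A onto eigenvalue (-1)^x.\<close>
definition eigproj :: "complex^2^2 \<Rightarrow> nat \<Rightarrow> complex^2^2" where
  "eigproj A x = msc (1/2) (mat 1 + msc ((-1) ^ x) A)"

definition cinner :: "complex^2 \<Rightarrow> complex^2 \<Rightarrow> complex" where
  "cinner u v = (\<Sum>i\<in>UNIV. cnj (u $ i) * v $ i)"

definition born :: "complex^2 \<Rightarrow> complex^2^2 \<Rightarrow> nat \<Rightarrow> real" where
  "born psi A x = Re (cinner psi (eigproj A x *v psi))"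

definition density :: "complex^2 \<Rightarrow> complex^2^2" where
  "density psi = (\<chi> i j. psi $ i * cnj (psi $ j))"

end

theory Submission
  imports Defs
begin


lemma pmf_int_count:
  fixes f :: "'l \<Rightarrow> real"
  assumes "\<And>l. \<bar>f l\<bar> \<le> B"
  shows "measure_pmf.expectation p f = (\<integral>l. pmf p l * f l \<partial>count_space UNIV)"
    and "integrable (count_space UNIV) (\<lambda>l. pmf p l * f l)"
proof -
  have i: "integrable (measure_pmf p) f"
    by (rule measure_pmf.integrable_const_bound[where B=B]) (auto simp: assms)
  show "measure_pmf.expectation p f = (\<integral>l. pmf p l * f l \<partial>count_space UNIV)"
    unfolding measure_pmf_eq_density by (subst integral_real_density) auto
  show "integrable (count_space UNIV) (\<lambda>l. pmf p l * f l)"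
    using i unfolding measure_pmf_eq_density by (subst (asm) integrable_real_density) auto
qed

lemma mix_expect:
  fixes f :: "'l \<Rightarrow> real"
  assumes "\<And>l. \<bar>f l\<bar> \<le> B"
    and "\<And>l. pmf r l = (1/2) * pmf p l + (1/2) * pmf q l"
  shows "measure_pmf.expectation r f = (1/2) * measure_pmf.expectation p f + (1/2) * measure_pmf.expectation q f"
proof -
  have ip: "integrable (count_space UNIV) (\<lambda>l. pmf p l * f l)"
    and iq: "integrable (count_space UNIV) (\<lambda>l. pmf q l * f l)"
    using pmf_int_count(2)[of f B, OF assms(1)] by blast+
  have "measure_pmf.expectation r f = (\<integral>l. pmf r l * f l \<partial>count_space UNIV)"
    using pmf_int_count(1)[of f B, OF assms(1)] by blast
  also have "\<dots> = (\<integral>l. (1/2) * (pmf p l * f l) + (1/2) * (pmf q l * f l) \<partial>count_space UNIV)"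
    by (simp add: assms(2) algebra_simps)
  also have "\<dots> = (1/2) * (\<integral>l. pmf p l * f l \<partial>count_space UNIV) + (1/2) * (\<integral>l. pmf q l * f l \<partial>count_space UNIV)"
    using ip iq by simp
  finally show ?thesis using pmf_int_count(1)[of f B, OF assms(1)] by simp
qed

lemma int_pmf:
  fixes f :: "'l \<Rightarrow> real"
  assumes "\<And>l. \<bar>f l\<bar> \<le> B"
  shows "integrable (measure_pmf p) f"
  by (rule measure_pmf.integrable_const_bound[where B=B]) (auto simp: assms)

lemma bin_pmf: "set_pmf p \<subseteq> {0, 1::nat} \<Longrightarrow> pmf p 1 = 1 - pmf p 0"
  using sum_pmf_eq_1[of "{0,1::nat}" p] by simp

lemma pointwise7:
  fixes r1 r2 r3 :: real
  assumes "0 \<le> r1" "r1 \<le> 1" "0 \<le> r2" "r2 \<le> 1" "0 \<le> r3" "r3 \<le> 1"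
  shows "max (r1 + (1 - r2) + (1 - r3)) ((1 - r1) + r2 + r3)
       + max ((1 - r1) + r2 + (1 - r3)) (r1 + (1 - r2) + r3)
       + max ((1 - r1) + (1 - r2) + r3) (r1 + r2 + (1 - r3)) \<le> 7"
  using assms by (simp add: max_def) linarith?

lemma classical_part:
  fixes Prep :: "nat \<Rightarrow> nat \<Rightarrow> 'p" and Mix :: "nat \<Rightarrow> 'p" and Meas :: "nat \<Rightarrow> 'm"
    and stat :: "'p \<Rightarrow> 'm \<Rightarrow> nat \<Rightarrow> real"
    and mu :: "'p \<Rightarrow> 'l pmf" and xi :: "'m \<Rightarrow> 'l \<Rightarrow> nat pmf"
  assumes reproduces: "\<forall>P M x. stat P M x = model_prob mu xi P M x"
    and binary: "\<forall>y\<in>{1,2,3}. \<forall>l. set_pmf (xi (Meas y) l) \<subseteq> {0, 1}"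
    and mixture: "\<forall>t\<in>{1,2,3}. \<forall>l. pmf (mu (Mix t)) l
                    = (1/2) * pmf (mu (Prep t 0)) l + (1/2) * pmf (mu (Prep t 1)) l"
    and trit_oblivious: "\<forall>M x. stat (Mix 1) M x = stat (Mix 2) M x \<and> stat (Mix 2) M x = stat (Mix 3) M x"
    and pnc: "prep_noncontextual stat mu"
  shows "(1/18) * (\<Sum>t\<in>{1,2,3}. \<Sum>b\<in>{0,1}. \<Sum>y\<in>{1,2,3}. stat (Prep t b) (Meas y) (cfun y t b)) \<le> 7/9"
proof -
  define nu where "nu = mu (Mix 1)"
  have nu: "mu (Mix t) = nu" if "t \<in> {1,2,3}" for t
  proof -
    have "mu (Mix 1) = mu (Mix 2)" "mu (Mix 2) = mu (Mix 3)"
      using pnc trit_oblivious unfolding prep_noncontextual_def by metis+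
    then show ?thesis using that unfolding nu_def by auto
  qed
  define r where "r y l = pmf (xi (Meas y) l) 0" for y l
  have r1: "pmf (xi (Meas y) l) 1 = 1 - r y l" if "y \<in> {1,2,3}" for y l
    using bin_pmf binary that unfolding r_def by blast
  have r01: "0 \<le> r y l \<and> r y l \<le> 1" for y l unfolding r_def by (simp add: pmf_le_1)
  define F where "F t b l = (\<Sum>y\<in>{1,2,3::nat}. pmf (xi (Meas y) l) (cfun y t b))" for t b l
  define G where "G t l = max (F t 0 l) (F t 1 l)" for t l
  have Fb: "\<bar>F t b l\<bar> \<le> 3" for t b l
  proof -
    have "0 \<le> F t b l" unfolding F_def by (intro sum_nonneg) auto
    moreover have "F t b l \<le> (\<Sum>y\<in>{1,2,3::nat}. 1)" unfolding F_def by (intro sum_mono) (simp add: pmf_le_1)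
    ultimately show ?thesis by simp
  qed
  have Gb: "\<bar>G t l\<bar> \<le> 3" for t l using Fb[of t 0 l] Fb[of t 1 l] unfolding G_def by auto
  have stat_sum: "(\<Sum>y\<in>{1,2,3}. stat (Prep t b) (Meas y) (cfun y t b))
      = measure_pmf.expectation (mu (Prep t b)) (F t b)" for t b
  proof -
    have "(\<Sum>y\<in>{1,2,3}. stat (Prep t b) (Meas y) (cfun y t b))
        = (\<Sum>y\<in>{1,2,3::nat}. measure_pmf.expectation (mu (Prep t b)) (\<lambda>l. pmf (xi (Meas y) l) (cfun y t b)))"
      using reproduces unfolding model_prob_def by simp
    also have "\<dots> = measure_pmf.expectation (mu (Prep t b)) (F t b)"
      unfolding F_def
      using Bochner_Integration.integral_sum[where I="{1,2,3::nat}" and M="measure_pmf (mu (Prep t b))" and f="\<lambda>y l. pmf (xi (Meas y) l) (cfun y t b)"]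
      by (simp add: int_pmf[where B=1] pmf_le_1)
    finally show ?thesis .
  qed
  have per_t: "(\<Sum>b\<in>{0,1}. \<Sum>y\<in>{1,2,3}. stat (Prep t b) (Meas y) (cfun y t b))
       \<le> 2 * measure_pmf.expectation nu (G t)" if t: "t \<in> {1,2,3}" for t
  proof -
    have "(\<Sum>b\<in>{0,1}. \<Sum>y\<in>{1,2,3}. stat (Prep t b) (Meas y) (cfun y t b))
        = measure_pmf.expectation (mu (Prep t 0)) (F t 0) + measure_pmf.expectation (mu (Prep t 1)) (F t 1)"
      by (subst sum.insert) (simp_all only: stat_sum finite.intros insert_iff empty_iff sum.empty, simp_all)
    also have "\<dots> \<le> measure_pmf.expectation (mu (Prep t 0)) (G t) + measure_pmf.expectation (mu (Prep t 1)) (G t)"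
      by (intro add_mono integral_mono int_pmf[where B=3] Fb Gb) (auto simp: G_def)
    also have "\<dots> = 2 * measure_pmf.expectation (mu (Mix t)) (G t)"
      using mix_expect[of "G t" 3 "mu (Mix t)" "mu (Prep t 0)" "mu (Prep t 1)"] Gb mixture t by auto
    finally show ?thesis using nu[OF t] by simp
  qed
  have "(\<Sum>t\<in>{1,2,3}. \<Sum>b\<in>{0,1}. \<Sum>y\<in>{1,2,3}. stat (Prep t b) (Meas y) (cfun y t b))
      \<le> (\<Sum>t\<in>{1,2,3::nat}. 2 * measure_pmf.expectation nu (G t))"
    by (rule sum_mono) (rule per_t)
  also have "\<dots> = 2 * measure_pmf.expectation nu (\<lambda>l. \<Sum>t\<in>{1,2,3::nat}. G t l)"
    by (simp add: sum_distrib_left[symmetric] Bochner_Integration.integral_sum[symmetric] int_pmf[where B=3] Gb)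
  also have "\<dots> \<le> 2 * measure_pmf.expectation nu (\<lambda>l. 7)"
  proof -
    have "(\<Sum>t\<in>{1,2,3::nat}. G t l) \<le> 7" for l
    proof -
      have e: "G 1 l + G 2 l + G 3 l = max (r 1 l + (1 - r 2 l) + (1 - r 3 l)) ((1 - r 1 l) + r 2 l + r 3 l)
       + max ((1 - r 1 l) + r 2 l + (1 - r 3 l)) (r 1 l + (1 - r 2 l) + r 3 l)
       + max ((1 - r 1 l) + (1 - r 2 l) + r 3 l) (r 1 l + r 2 l + (1 - r 3 l))"
        using r1[of 1 l] r1[of 2 l] r1[of 3 l]
        unfolding G_def F_def by (simp add: cfun_def r_def[symmetric] algebra_simps)
      show ?thesis using pointwise7[of "r 1 l" "r 2 l" "r 3 l"] r01 e by simp
    qed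
    moreover have "\<bar>\<Sum>t\<in>{1,2,3::nat}. G t l\<bar> \<le> 9" for l
      using Gb[of 1 l] Gb[of 2 l] Gb[of 3 l] by simp
    ultimately show ?thesis
      by (intro mult_left_mono integral_mono int_pmf[where B=9]) auto
  qed
  finally show ?thesis by simp
qed



lemma eig_alg:
  fixes a c ab cb s C S :: complex
  assumes "s * s = 1" "C * a + S * c = s * a" "S * a - C * c = s * c" "C * ab + S * cb = s * ab" "S * ab - C * cb = s * cb" "ab * a + cb * c = 1"
  shows "ab * a = (1+s * C)/2" "cb * c = (1 - s * C)/2" "ab  *  c = s * S/2" "cb * a = s * S/2"
proof -
  have u: "s * (ab * a - cb * c) = C"
  proof -
    have "s * (ab * a - cb * c) = (s * ab) * a - cb * (s * c)" by (simp add: algebra_simps)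
    also have "\<dots> = (C * ab + S * cb) * a - cb * (S * a - C * c)" using assms by simp
    also have "\<dots> = C * (ab * a + cb * c)" by (simp add: algebra_simps)
    finally show ?thesis using assms by simp
  qed
  then have u2: "ab * a - cb * c = s * C" using assms(1)
    by (metis mult.assoc mult_1)
  show "ab * a = (1+s * C)/2" "cb * c = (1 - s * C)/2" using u2 assms(6) by (simp_all add: field_simps; algebra)+
  have v: "2 * s * (ab * c) = S"
  proof -
    have "2 * s * (ab * c) = (s * ab) * c + ab * (s * c)" by (simp add: algebra_simps)
    also have "\<dots> = (C * ab + S * cb) * c + ab * (S * a - C * c)" using assms by simp
    also have "\<dots> = S * (ab * a + cb * c)" by (simp add: algebra_simps)
    finally show ?thesis using assms by simp
  qed
  have w: "2 * s * (cb * a) = S"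
  proof -
    have "2 * s * (cb * a) = (s * cb) * a + cb * (s * a)" by (simp add: algebra_simps)
    also have "\<dots> = (S * ab - C * cb) * a + cb * (C * a + S * c)" using assms by simp
    also have "\<dots> = S * (ab * a + cb * c)" by (simp add: algebra_simps)
    finally show ?thesis using assms by simp
  qed
  show "ab  *  c = s * S/2" using v assms(1) by (metis (no_types) mult.assoc mult.commute mult_1 nonzero_mult_div_cancel_left zero_neq_numeral)
  show "cb  *  a = s * S/2" using w assms(1) by (metis (no_types) mult.assoc mult.commute mult_1 nonzero_mult_div_cancel_left zero_neq_numeral)
qed

definition cy :: "nat \<Rightarrow> real" where "cy t = cos (2 * pi * (real t - 1) / 3)"
definition sy :: "nat \<Rightarrow> real" where "sy t = sin (2 * pi * (real t - 1) / 3)"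

lemma Aobs_mv:
  "(Aobs t *v v) $ 1 = of_real (cy t) * v $ 1 + of_real (sy t) * v $ 2"
  "(Aobs t *v v) $ 2 = of_real (sy t) * v $ 1 - of_real (cy t) * v $ 2"
  by (simp_all add: matrix_vector_mult_def Aobs_def msc_def sigma_z_def sigma_x_def sum_2 cy_def sy_def)

lemma eigproj_mv:
  "(eigproj A x *v v) $ i = (1/2) * (v $ i + (-1) ^ x * (A *v v) $ i)"
  using exhaust_2[of i] by (auto simp add: matrix_vector_mult_def eigproj_def msc_def sum_2 mat_def algebra_simps)

lemma cinner_2: "cinner u v = cnj (u $ 1) * v $ 1 + cnj (u $ 2) * v $ 2"
  by (simp add: cinner_def sum_2)

lemma cy_sy_vals:
  "cy 1 = 1" "sy 1 = 0" "cy 2 = -1/2" "sy 2 = sqrt 3 / 2" "cy 3 = -1/2" "sy 3 = - (sqrt 3 / 2)"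
proof -
  have e3: "2 * pi * (real 3 - 1) / 3 = pi/3 + pi" by simp
  show "cy 1 = 1" "sy 1 = 0" by (simp_all add: cy_def sy_def)
  show "cy 2 = -1/2" "sy 2 = sqrt 3 / 2" by (simp_all add: cy_def sy_def cos_120 sin_120)
  have "cos (pi/3 + pi) = -1/2" "sin (pi/3 + pi) = - (sqrt 3 / 2)"
    by (simp_all only: cos_add sin_add cos_60 sin_60 cos_pi sin_pi)
  then show "cy 3 = -1/2" "sy 3 = - (sqrt 3 / 2)" unfolding cy_def sy_def e3 .
qed

lemma sign_sq: "((-1::complex) ^ b) * ((-1) ^ b) = 1"
  by (simp flip: power_add)

lemma eig_facts:
  assumes n: "cinner psi psi = 1" and e: "Aobs t *v psi = ((-1) ^ b) *s psi"
  shows "cnj (psi $ 1) * psi $ 1 = (1 + (-1) ^ b * of_real (cy t)) / 2"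
    "cnj (psi $ 2) * psi $ 2 = (1 - (-1) ^ b * of_real (cy t)) / 2"
    "cnj (psi $ 1) * psi $ 2 = (-1) ^ b * of_real (sy t) / 2"
    "cnj (psi $ 2) * psi $ 1 = (-1) ^ b * of_real (sy t) / 2"
proof -
  let ?s = "(-1::complex) ^ b"
  have e1: "of_real (cy t) * psi $ 1 + of_real (sy t) * psi $ 2 = ?s * psi $ 1"
    using arg_cong[OF e, of "\<lambda>v. v $ 1"] by (simp add: Aobs_mv)
  have e2: "of_real (sy t) * psi $ 1 - of_real (cy t) * psi $ 2 = ?s * psi $ 2"
    using arg_cong[OF e, of "\<lambda>v. v $ 2"] by (simp add: Aobs_mv)
  have e1c: "of_real (cy t) * cnj (psi $ 1) + of_real (sy t) * cnj (psi $ 2) = ?s * cnj (psi $ 1)"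
    using arg_cong[OF e1, of cnj] by simp
  have e2c: "of_real (sy t) * cnj (psi $ 1) - of_real (cy t) * cnj (psi $ 2) = ?s * cnj (psi $ 2)"
    using arg_cong[OF e2, of cnj] by simp
  have nn: "cnj (psi $ 1) * psi $ 1 + cnj (psi $ 2) * psi $ 2 = 1" using n by (simp add: cinner_2)
  note E = eig_alg[OF sign_sq e1 e2 e1c e2c nn]
  show "cnj (psi $ 1) * psi $ 1 = (1 + (-1) ^ b * of_real (cy t)) / 2"
    "cnj (psi $ 2) * psi $ 2 = (1 - (-1) ^ b * of_real (cy t)) / 2"
    "cnj (psi $ 1) * psi $ 2 = (-1) ^ b * of_real (sy t) / 2"
    "cnj (psi $ 2) * psi $ 1 = (-1) ^ b * of_real (sy t) / 2" using E by simp_all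
qed

lemma born_formula:
  assumes n: "cinner psi psi = 1" and e: "Aobs t *v psi = ((-1) ^ b) *s psi"
  shows "born psi (Aobs y) x = (1 + (-1) ^ x * (-1) ^ b * (cy y * cy t + sy y * sy t)) / 2"
proof -
  let ?a = "psi $ 1" and ?c = "psi $ 2"
  note F = eig_facts[OF n e]
  have "cinner psi (eigproj (Aobs y) x *v psi)
      = (1/2) * (cnj ?a * ?a + cnj ?c * ?c) + (-1)^x / 2 * (of_real (cy y) * (cnj ?a * ?a - cnj ?c * ?c)
         + of_real (sy y) * (cnj ?a * ?c + cnj ?c * ?a))"
    by (simp add: cinner_2 eigproj_mv Aobs_mv algebra_simps)
  also have "\<dots> = of_real ((1 + (-1) ^ x * (-1) ^ b * (cy y * cy t + sy y * sy t)) / 2)"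
    unfolding F by (simp add: field_simps)
  finally show ?thesis unfolding born_def by (metis Re_complex_of_real)
qed

lemma born_val:
  assumes t: "t \<in> {1,2,3}" and y: "y \<in> {1,2,3}" and b: "b \<in> {0,1}"
    and n: "cinner psi psi = 1" and e: "Aobs t *v psi = ((-1) ^ b) *s psi"
  shows "born psi (Aobs y) (cfun y t b) = (if y = t then 1 else 3/4)"
  unfolding born_formula[OF n e] using t y b
  using cy_sy_vals by (auto simp: cfun_def cy_sy_vals)

lemma density_sum:
  assumes n0: "cinner psi0 psi0 = 1" and e0: "Aobs t *v psi0 = ((-1) ^ 0) *s psi0"
    and n1: "cinner psi1 psi1 = 1" and e1: "Aobs t *v psi1 = ((-1) ^ 1) *s psi1"
  shows "density psi0 + density psi1 = mat 1"
proof -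
  note F0 = eig_facts[OF n0 e0] and F1 = eig_facts[OF n1 e1]
  have ent: "(density psi0 + density psi1) $ i $ j = cnj (psi0 $ j) * psi0 $ i + cnj (psi1 $ j) * psi1 $ i" for i j
    by (simp add: density_def mult.commute)
  show ?thesis
    unfolding vec_eq_iff forall_2 ent F0 F1 by (simp add: mat_def field_simps)
qed

definition psiE :: "nat \<Rightarrow> nat \<Rightarrow> complex^2" where
  "psiE t b = (let h = pi * (real t - 1) / 3 in
     if b = 0 then (\<chi> i. if i = 1 then of_real (cos h) else of_real (sin h))
     else (\<chi> i. if i = 1 then - of_real (sin h) else of_real (cos h)))"

lemma psiE_ok:
  assumes b: "b \<in> {0,1}"
  shows "cinner (psiE t b) (psiE t b) = 1 \<and> Aobs t *v psiE t b = ((-1) ^ b) *s psiE t b"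
proof -
  define h where "h = pi * (real t - 1) / 3"
  have cy: "cy t = cos h ^ 2 - sin h ^ 2" unfolding cy_def h_def
    using cos_double[of "pi * (real t - 1) / 3"] by (simp add: field_simps)
  have sy: "sy t = 2 * sin h * cos h" unfolding sy_def h_def
    using sin_double[of "pi * (real t - 1) / 3"] by (simp add: field_simps)
  have one: "sin h ^ 2 + cos h ^ 2 = 1" by simp
  have r1: "(cos h ^ 2 - sin h ^ 2) * cos h + 2 * sin h * cos h * sin h = cos h"
  proof - have "(cos h ^ 2 - sin h ^ 2) * cos h + 2 * sin h * cos h * sin h = cos h * (sin h ^ 2 + cos h ^ 2)" by algebra
    then show ?thesis using one by simp qed
  have r2: "2 * sin h * cos h * cos h - (cos h ^ 2 - sin h ^ 2) * sin h = sin h"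
  proof - have "2 * sin h * cos h * cos h - (cos h ^ 2 - sin h ^ 2) * sin h = sin h * (sin h ^ 2 + cos h ^ 2)" by algebra
    then show ?thesis using one by simp qed
  show ?thesis using b
    apply (auto simp: psiE_def Let_def h_def[symmetric] cinner_2 vec_eq_iff forall_2 Aobs_mv cy sy
       simp flip: of_real_mult of_real_add of_real_diff of_real_minus)
    using r1 r2 one by (auto simp: power2_eq_square) (metis add.commute)?
qed

theorem mainTheorem7:
  fixes Prep :: "nat \<Rightarrow> nat \<Rightarrow> 'p" and Mix :: "nat \<Rightarrow> 'p" and Meas :: "nat \<Rightarrow> 'm"
    and stat :: "'p \<Rightarrow> 'm \<Rightarrow> nat \<Rightarrow> real"
    and mu :: "'p \<Rightarrow> 'l pmf" and xi :: "'m \<Rightarrow> 'l \<Rightarrow> nat pmf"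
  assumes reproduces: "\<forall>P M x. stat P M x = model_prob mu xi P M x"
    and binary: "\<forall>y\<in>{1,2,3}. \<forall>l. set_pmf (xi (Meas y) l) \<subseteq> {0, 1}"
    and mixture: "\<forall>t\<in>{1,2,3}. \<forall>l. pmf (mu (Mix t)) l
                    = (1/2) * pmf (mu (Prep t 0)) l + (1/2) * pmf (mu (Prep t 1)) l"
    and trit_oblivious: "\<forall>M x. stat (Mix 1) M x = stat (Mix 2) M x \<and> stat (Mix 2) M x = stat (Mix 3) M x"
    and pnc: "prep_noncontextual stat mu"
  shows "(1/18) * (\<Sum>t\<in>{1,2,3}. \<Sum>b\<in>{0,1}. \<Sum>y\<in>{1,2,3}. stat (Prep t b) (Meas y) (cfun y t b)) \<le> 7/9
    \<and> (\<exists>psi :: nat \<Rightarrow> nat \<Rightarrow> complex^2. \<forall>t\<in>{1,2,3}. \<forall>b\<in>{0,1}.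
          cinner (psi t b) (psi t b) = 1 \<and> Aobs t *v psi t b = ((-1) ^ b) *s psi t b)
    \<and> (\<forall>psi :: nat \<Rightarrow> nat \<Rightarrow> complex^2.
         (\<forall>t\<in>{1,2,3}. \<forall>b\<in>{0,1}.
            cinner (psi t b) (psi t b) = 1 \<and> Aobs t *v psi t b = ((-1) ^ b) *s psi t b) \<longrightarrow>
         (\<forall>t\<in>{1,2,3}. msc (1/2) (density (psi t 0) + density (psi t 1))
                          = msc (1/2) (mat 1))
         \<and> (1/18) * (\<Sum>t\<in>{1,2,3}. \<Sum>b\<in>{0,1}. \<Sum>y\<in>{1,2,3}.
                        born (psi t b) (Aobs y) (cfun y t b)) = 5/6)"
  proof -
  have A: "(1/18) * (\<Sum>t\<in>{1,2,3}. \<Sum>b\<in>{0,1}. \<Sum>y\<in>{1,2,3}. stat (Prep t b) (Meas y) (cfun y t b)) \<le> 7/9"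
    by (rule classical_part[OF reproduces binary mixture trit_oblivious pnc])
  have B: "\<exists>psi :: nat \<Rightarrow> nat \<Rightarrow> complex^2. \<forall>t\<in>{1,2,3}. \<forall>b\<in>{0,1}.
          cinner (psi t b) (psi t b) = 1 \<and> Aobs t *v psi t b = ((-1) ^ b) *s psi t b"
    using psiE_ok by blast
  have C: "(\<forall>t\<in>{1,2,3}. msc (1/2) (density (psi t 0) + density (psi t 1))
                          = msc (1/2) (mat 1))
         \<and> (1/18) * (\<Sum>t\<in>{1,2,3}. \<Sum>b\<in>{0,1}. \<Sum>y\<in>{1,2,3}.
                        born (psi t b) (Aobs y) (cfun y t b)) = 5/6"
    if H: "\<forall>t\<in>{1,2,3}. \<forall>b\<in>{0,1}.
            cinner (psi t b) (psi t b) = 1 \<and> Aobs t *v psi t b = ((-1) ^ b) *s psi t b"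
    for psi :: "nat \<Rightarrow> nat \<Rightarrow> complex^2"
  proof
    show "\<forall>t\<in>{1,2,3}. msc (1/2) (density (psi t 0) + density (psi t 1)) = msc (1/2) (mat 1)"
    proof
      fix t :: nat assume t: "t \<in> {1,2,3}"
      have h0: "cinner (psi t 0) (psi t 0) = 1" "Aobs t *v psi t 0 = ((-1) ^ 0) *s psi t 0"
        using H t by blast+
      have h1: "cinner (psi t 1) (psi t 1) = 1" "Aobs t *v psi t 1 = ((-1) ^ 1) *s psi t 1"
        using H t by blast+
      show "msc (1/2) (density (psi t 0) + density (psi t 1)) = msc (1/2) (mat 1)"
        using density_sum[OF h0 h1] by simp
    qed
    have "(\<Sum>t\<in>{1,2,3}. \<Sum>b\<in>{0,1}. \<Sum>y\<in>{1,2,3}. born (psi t b) (Aobs y) (cfun y t b))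
        = (\<Sum>t\<in>{1,2,3::nat}. \<Sum>b\<in>{0,1::nat}. \<Sum>y\<in>{1,2,3::nat}. (if y = t then 1 else 3/4 :: real))"
    proof (intro sum.cong refl)
      fix t b y :: nat assume "t \<in> {1,2,3}" "b \<in> {0,1}" "y \<in> {1,2,3}"
      then show "born (psi t b) (Aobs y) (cfun y t b) = (if y = t then 1 else 3/4)"
        using born_val H by blast
    qed
    also have "\<dots> = 15" by simp
    finally show "(1/18) * (\<Sum>t\<in>{1,2,3}. \<Sum>b\<in>{0,1}. \<Sum>y\<in>{1,2,3}.
                        born (psi t b) (Aobs y) (cfun y t b)) = 5/6" by simp
  qed
  show ?thesis using A B C by blast
qed

end
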